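(* For any stationary process over a finite alphabet and every $L\ge2$, $$h'_\mu(L)-h_\mu(L)\ \ge\ \frac{\mathbf{E}'(L)}{L}.$$
   Context: $H(L)$ is the Shannon entropy (base 2) of $S_1\cdots S_L$, $H(0)=0$; $h_\mu(L)=H(L)-H(L-1)$; $h'_\mu(L)=H(L)/L$. For even $L$, $\mathbf{E}'(L)=I[S_1\cdots S_{L/2};\,S_{L/2+1}\cdots S_L]$ (mutual information between the two halves of an $L$-block); for odd $L$, $\mathbf{E}'(L)=\mathbf{E}'(L-1)$. *)

theory Defs
  imports "HOL-Probability.Probability"
begin

text \<open>A discrete-time process over a finite alphabet 'a is modelled by random variables
  X :: nat => 'm => 'a on a probability space M; S_1 S_2 ... correspond to X 0, X 1, ....\<close>

definition block_prob :: "'m measure \<Rightarrow> (nat \<Rightarrow> 'm \<Rightarrow> 'a) \<Rightarrow> nat \<Rightarrow> nat \<Rightarrow> 'a list \<Rightarrow> real" where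
  "block_prob M X s n w = measure M {\<omega> \<in> space M. map (\<lambda>i. X (s + i) \<omega>) [0..<n] = w}"

definition stationary_process :: "'m measure \<Rightarrow> (nat \<Rightarrow> 'm \<Rightarrow> 'a) \<Rightarrow> bool" where
  "stationary_process M X \<longleftrightarrow> prob_space M \<and>
     (\<forall>i. X i \<in> measurable M (count_space UNIV)) \<and>
     (\<forall>s n w. block_prob M X s n w = block_prob M X 0 n w)"

definition words :: "nat \<Rightarrow> 'a list set" where
  "words n = {w. length w = n}"

definition block_entropy :: "'m measure \<Rightarrow> (nat \<Rightarrow> 'm \<Rightarrow> 'a) \<Rightarrow> nat \<Rightarrow> real" where
  "block_entropy M X L =
     - (\<Sum>w\<in>words L. (let p = block_prob M X 0 L w in if p = 0 then 0 else p * log 2 p))"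

definition entropy_gain :: "'m measure \<Rightarrow> (nat \<Rightarrow> 'm \<Rightarrow> 'a) \<Rightarrow> nat \<Rightarrow> real" where
  "entropy_gain M X L = block_entropy M X L - block_entropy M X (L - 1)"

definition entropy_rate_est :: "'m measure \<Rightarrow> (nat \<Rightarrow> 'm \<Rightarrow> 'a) \<Rightarrow> nat \<Rightarrow> real" where
  "entropy_rate_est M X L = block_entropy M X L / real L"

definition halves_mutual_info :: "'m measure \<Rightarrow> (nat \<Rightarrow> 'm \<Rightarrow> 'a) \<Rightarrow> nat \<Rightarrow> real" where
  "halves_mutual_info M X m =
     (\<Sum>u\<in>words m. \<Sum>v\<in>words m.
        (let pj = block_prob M X 0 (2 * m) (u @ v);
             pu = block_prob M X 0 m u;
             pv = block_prob M X m m v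
         in if pj = 0 then 0 else pj * log 2 (pj / (pu * pv))))"

definition excess_est :: "'m measure \<Rightarrow> (nat \<Rightarrow> 'm \<Rightarrow> 'a) \<Rightarrow> nat \<Rightarrow> real" where
  "excess_est M X L =
     (if even L then halves_mutual_info M X (L div 2) else halves_mutual_info M X ((L - 1) div 2))"

end

theory Submission imports Defs begin

definition ev :: "'m measure \<Rightarrow> (nat \<Rightarrow> 'm \<Rightarrow> 'a) \<Rightarrow> nat \<Rightarrow> nat \<Rightarrow> 'a list \<Rightarrow> 'm set" where
  "ev M X s n w = {\<omega> \<in> space M. map (\<lambda>i. X (s + i) \<omega>) [0..<n] = w}"

lemma finite_words: "finite (words n :: ('a::finite) list set)"
  using finite_lists_length_eq[OF finite[of UNIV], of n] unfolding words_def by simp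

lemma ev_sets:
  assumes "\<forall>i. X i \<in> measurable M (count_space UNIV)"
  shows "ev M X s n w \<in> sets M"
proof (cases "length w = n")
  case True
  have "ev M X s n w = {\<omega> \<in> space M. \<forall>i\<in>{..<n}. X (s+i) \<omega> = w ! i}"
    unfolding ev_def using True by (auto simp: list_eq_iff_nth_eq)
  also have "\<dots> \<in> sets M"
  proof (rule sets.sets_Collect_finite_All)
    fix i
    have "X (s+i) -` {w ! i} \<inter> space M \<in> sets M"
      using measurable_sets[OF assms[rule_format, of "s+i"], of "{w!i}"] by simp
    then show "{x \<in> space M. X (s + i) x = w ! i} \<in> sets M"
      by (simp add: vimage_def Int_def conj_commute)
  qed simp
  finally show ?thesis .
next
  case False
  then have "ev M X s n w = {}" unfolding ev_def by auto
  then show ?thesis by simp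
qed

lemma map_upt_add: "map f [0..<n+m] = map f [0..<n] @ map (\<lambda>i. f (n+i)) [0..<m]"
  by (induction m) auto

lemma ev_append:
  assumes "length u = n"
  shows "ev M X s (n+m) (u@v) = ev M X s n u \<inter> ev M X (s+n) m v"
proof -
  have e: "map (\<lambda>i. X (s + i) \<omega>) [0..<n+m] = map (\<lambda>i. X (s + i) \<omega>) [0..<n] @ map (\<lambda>i. X (s + n + i) \<omega>) [0..<m]" for \<omega>
    by (simp only: map_upt_add add.assoc)
  have c: "(map (\<lambda>i. X (s + i) \<omega>) [0..<n] @ map (\<lambda>i. X (s + n + i) \<omega>) [0..<m] = u @ v)
      \<longleftrightarrow> (map (\<lambda>i. X (s + i) \<omega>) [0..<n] = u \<and> map (\<lambda>i. X (s + n + i) \<omega>) [0..<m] = v)" for \<omega>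
    by (rule append_eq_append_conv) (simp add: assms)
  show ?thesis unfolding ev_def e c by blast
qed

lemma partition_sum:
  assumes "prob_space M" "\<forall>i. X i \<in> measurable M (count_space UNIV)" "A \<in> sets M"
  shows "(\<Sum>w\<in>words n. measure M (A \<inter> ev M X s n (w :: ('a::finite) list))) = measure M A"
proof -
  interpret prob_space M by fact
  have "A = (\<Union>w\<in>words n. A \<inter> ev M X s n w)"
    using sets.sets_into_space[OF assms(3)] by (auto simp: ev_def words_def)
  moreover have "measure M (\<Union>w\<in>words n. A \<inter> ev M X s n w) = (\<Sum>w\<in>words n. measure M (A \<inter> ev M X s n w))"
  proof (rule finite_measure_finite_Union)
    show "disjoint_family_on (\<lambda>w. A \<inter> ev M X s n w) (words n)"
      by (auto simp: disjoint_family_on_def ev_def)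
  qed (auto simp: finite_words intro!: assms(3) ev_sets[OF assms(2)])
  ultimately show ?thesis by simp
qed

lemma bp_ev: "block_prob M X s n w = measure M (ev M X s n w)"
  unfolding block_prob_def ev_def by simp

lemma marg1:
  assumes "prob_space M" "\<forall>i. X i \<in> measurable M (count_space UNIV)" "length u = n"
  shows "(\<Sum>v\<in>words m. block_prob M X s (n+m) (u@v)) = block_prob M X s n (u :: ('a::finite) list)"
  unfolding bp_ev ev_append[OF assms(3)]
  by (rule partition_sum[OF assms(1,2) ev_sets[OF assms(2)]])

lemma marg2:
  assumes "prob_space M" "\<forall>i. X i \<in> measurable M (count_space UNIV)" "length v = m"
  shows "(\<Sum>u\<in>words n. block_prob M X s (n+m) (u@v)) = block_prob M X (s+n) m (v :: ('a::finite) list)"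
proof -
  have "(\<Sum>u\<in>words n. block_prob M X s (n+m) (u@v)) = (\<Sum>u\<in>words n. measure M (ev M X (s+n) m v \<inter> ev M X s n u))"
    by (rule sum.cong) (auto simp: bp_ev ev_append words_def Int_commute)
  also have "\<dots> = block_prob M X (s+n) m v"
    unfolding bp_ev by (rule partition_sum[OF assms(1,2) ev_sets[OF assms(2)]])
  finally show ?thesis .
qed


lemma sum_words_add:
  fixes g :: "'a::finite list \<Rightarrow> 'b::comm_monoid_add"
  shows "(\<Sum>x\<in>words (n+m). g x) = (\<Sum>u\<in>words n. \<Sum>v\<in>words m. g (u@v :: ('a::finite) list))"
proof -
  have i: "inj_on (\<lambda>(u,v). u@v :: 'a list) (words n \<times> words m)"
    by (auto simp: inj_on_def words_def)
  have im: "(\<lambda>(u,v). u@v :: 'a list) ` (words n \<times> words m) = words (n+m)"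
  proof
    show "(\<lambda>(u,v). u@v :: 'a list) ` (words n \<times> words m) \<subseteq> words (n+m)"
      by (auto simp: words_def)
  next
    show "words (n+m) \<subseteq> (\<lambda>(u,v). u@v :: 'a list) ` (words n \<times> words m)"
    proof
      fix y :: "'a list" assume "y \<in> words (n+m)"
      then show "y \<in> (\<lambda>(u,v). u@v) ` (words n \<times> words m)"
        by (intro image_eqI[of _ _ "(take n y, drop n y)"]) (auto simp: words_def)
    qed
  qed
  have "(\<Sum>x\<in>words (n+m). g x) = (\<Sum>(u,v)\<in>words n \<times> words m. g (u@v))"
    unfolding im[symmetric] by (subst sum.reindex[OF i]) (simp add: case_prod_unfold)
  then show ?thesis by (simp add: sum.cartesian_product)
qed

lemma sum_words_1: "(\<Sum>x\<in>words (Suc 0). g x) = (\<Sum>a\<in>UNIV. g [a :: 'a::finite])"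
proof -
  have "bij_betw (\<lambda>a. [a]) UNIV (words 1 :: 'a list set)"
    by (rule bij_betwI') (auto simp: words_def length_Suc_conv)
  then show ?thesis by (subst sum.reindex_bij_betw[symmetric]) auto
qed

lemma sum_words_front: "(\<Sum>x\<in>words (Suc n). g x) = (\<Sum>a\<in>UNIV. \<Sum>w\<in>words n. g (a # w :: ('a::finite) list))"
  using sum_words_add[where n=1 and m=n and g=g] by (simp add: sum_words_1)

lemma sum_words_back: "(\<Sum>x\<in>words (Suc n). g x) = (\<Sum>w\<in>words n. \<Sum>a\<in>UNIV. g (w @ [a] :: ('a::finite) list))"
  using sum_words_add[where n=n and m=1 and g=g] by (simp add: sum_words_1)

definition plog :: "real \<Rightarrow> real" where
  "plog t = (if t = 0 then 0 else t * log 2 t)"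

lemma plog_sum:
  assumes "finite B" "\<And>b. b \<in> B \<Longrightarrow> f b \<ge> 0"
  shows "(\<Sum>b\<in>B. f b * log 2 (\<Sum>b'\<in>B. f b')) = plog (\<Sum>b\<in>B. f b)"
proof (cases "(\<Sum>b\<in>B. f b) = 0")
  case True
  then have "\<forall>b\<in>B. f b = 0" using sum_nonneg_eq_0_iff[OF assms] by simp
  then show ?thesis using True by (simp add: plog_def)
next
  case False
  then show ?thesis by (simp add: plog_def sum_distrib_right)
qed

lemma mi_identity:
  fixes P :: "'u \<Rightarrow> 'v \<Rightarrow> real"
  assumes "finite U" "finite V" "\<And>u v. P u v \<ge> 0"
  shows "(\<Sum>u\<in>U. \<Sum>v\<in>V. (if P u v = 0 then 0 else P u v * log 2 (P u v / ((\<Sum>v'\<in>V. P u v') * (\<Sum>u'\<in>U. P u' v)))))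
     = (\<Sum>u\<in>U. \<Sum>v\<in>V. plog (P u v)) - (\<Sum>u\<in>U. plog (\<Sum>v\<in>V. P u v)) - (\<Sum>v\<in>V. plog (\<Sum>u\<in>U. P u v))"
proof -
  have pt: "(if P u v = 0 then 0 else P u v * log 2 (P u v / ((\<Sum>v'\<in>V. P u v') * (\<Sum>u'\<in>U. P u' v))))
      = plog (P u v) - P u v * log 2 (\<Sum>v'\<in>V. P u v') - P u v * log 2 (\<Sum>u'\<in>U. P u' v)"
    if "u \<in> U" "v \<in> V" for u v
  proof (cases "P u v = 0")
    case False
    then have p: "P u v > 0" using assms(3)[of u v] by simp
    have "P u v \<le> (\<Sum>v'\<in>V. P u v')" by (rule member_le_sum) (use assms that in auto)
    then have a: "(\<Sum>v'\<in>V. P u v') > 0" using p by simp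
    have "P u v \<le> (\<Sum>u'\<in>U. P u' v)" by (rule member_le_sum) (use assms that in auto)
    then have b: "(\<Sum>u'\<in>U. P u' v) > 0" using p by simp
    show ?thesis using p a b False
      by (simp add: plog_def log_divide log_mult algebra_simps)
  qed (simp add: plog_def)
  have s1: "(\<Sum>u\<in>U. \<Sum>v\<in>V. P u v * log 2 (\<Sum>v'\<in>V. P u v')) = (\<Sum>u\<in>U. plog (\<Sum>v\<in>V. P u v))"
    by (rule sum.cong[OF refl], rule plog_sum) (use assms in auto)
  have s2: "(\<Sum>u\<in>U. \<Sum>v\<in>V. P u v * log 2 (\<Sum>u'\<in>U. P u' v)) = (\<Sum>v\<in>V. plog (\<Sum>u\<in>U. P u v))"
    by (subst sum.swap, rule sum.cong[OF refl], rule plog_sum) (use assms in auto)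
  have "(\<Sum>u\<in>U. \<Sum>v\<in>V. (if P u v = 0 then 0 else P u v * log 2 (P u v / ((\<Sum>v'\<in>V. P u v') * (\<Sum>u'\<in>U. P u' v)))))
     = (\<Sum>u\<in>U. \<Sum>v\<in>V. plog (P u v) - P u v * log 2 (\<Sum>v'\<in>V. P u v') - P u v * log 2 (\<Sum>u'\<in>U. P u' v))"
    by (intro sum.cong refl pt)
  also have "\<dots> = (\<Sum>u\<in>U. \<Sum>v\<in>V. plog (P u v)) - (\<Sum>u\<in>U. \<Sum>v\<in>V. P u v * log 2 (\<Sum>v'\<in>V. P u v')) - (\<Sum>u\<in>U. \<Sum>v\<in>V. P u v * log 2 (\<Sum>u'\<in>U. P u' v))"
    by (simp add: sum_subtractf)
  finally show ?thesis using s1 s2 by simp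
qed


lemma plog_eq: "plog t = t * log 2 t"
  by (simp add: plog_def)

lemma cmi:
  fixes P :: "'a \<Rightarrow> 'w \<Rightarrow> 'b \<Rightarrow> real"
  assumes fin: "finite A" "finite W" "finite B" and nn: "\<And>a w b. P a w b \<ge> 0"
  shows "(\<Sum>a\<in>A. \<Sum>w\<in>W. plog (\<Sum>b\<in>B. P a w b)) + (\<Sum>w\<in>W. \<Sum>b\<in>B. plog (\<Sum>a\<in>A. P a w b))
    \<le> (\<Sum>a\<in>A. \<Sum>w\<in>W. \<Sum>b\<in>B. plog (P a w b)) + (\<Sum>w\<in>W. plog (\<Sum>a\<in>A. \<Sum>b\<in>B. P a w b))"
proof -
  define PAW where "PAW = (\<lambda>a w. \<Sum>b\<in>B. P a w b)"
  define PWB where "PWB = (\<lambda>w b. \<Sum>a\<in>A. P a w b)"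
  define PW where "PW = (\<lambda>w. \<Sum>a\<in>A. \<Sum>b\<in>B. P a w b)"
  define Q where "Q = (\<lambda>a w b. if PW w = 0 then 0 else PAW a w * PWB w b / PW w)"
  define T where "T = (\<lambda>a w b. if P a w b = 0 then 0 else P a w b * log 2 (P a w b * PW w / (PAW a w * PWB w b)))"
  have PAWs: "(\<Sum>a\<in>A. PAW a w) = PW w" for w unfolding PAW_def PW_def by simp
  have PWBs: "(\<Sum>b\<in>B. PWB w b) = PW w" for w unfolding PWB_def PW_def by (rule sum.swap)
  have le1: "P a w b \<le> PAW a w" if "a \<in> A" "b \<in> B" for a w b
    unfolding PAW_def by (rule member_le_sum) (use nn fin that in auto)
  have le2: "P a w b \<le> PWB w b" if "a \<in> A" "b \<in> B" for a w b
    unfolding PWB_def by (rule member_le_sum) (use nn fin that in auto)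
  have le3: "PAW a w \<le> PW w" if "a \<in> A" for a w
    unfolding PAW_def PW_def by (rule member_le_sum) (use nn fin that in \<open>auto intro: sum_nonneg\<close>)
  have Tdec: "T a w b = plog (P a w b) + P a w b * log 2 (PW w) - P a w b * log 2 (PAW a w) - P a w b * log 2 (PWB w b)"
    if "a \<in> A" "b \<in> B" for a w b
  proof (cases "P a w b = 0")
    case False
    then have p: "P a w b > 0" using nn[of a w b] by simp
    have "PAW a w > 0" "PWB w b > 0" using p le1[OF that, where w=w] le2[OF that, where w=w] by auto
    moreover have "PW w > 0" using \<open>PAW a w > 0\<close> le3[OF that(1), where w=w] by auto
    ultimately show ?thesis using p unfolding T_def
      by (simp add: plog_def log_divide log_mult algebra_simps)
  qed (simp add: T_def plog_def)
  have Tge: "T a w b \<ge> (P a w b - Q a w b) / ln 2" if "a \<in> A" "b \<in> B" for a w b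
  proof (cases "P a w b = 0")
    case True
    have "Q a w b \<ge> 0" unfolding Q_def PAW_def PWB_def PW_def
      using nn fin by (auto intro!: sum_nonneg divide_nonneg_nonneg mult_nonneg_nonneg)
    then show ?thesis using True unfolding T_def by (simp add: divide_nonpos_pos)
  next
    case False
    then have p: "P a w b > 0" using nn[of a w b] by simp
    have pa: "PAW a w > 0" and pb: "PWB w b > 0" using p le1[OF that, where w=w] le2[OF that, where w=w] by auto
    have pw: "PW w > 0" using \<open>PAW a w > 0\<close> le3[OF that(1), where w=w] by auto
    have Qd: "Q a w b = PAW a w * PWB w b / PW w" using pw unfolding Q_def by simp
    have qp: "Q a w b > 0" using Qd pa pb pw by simp
    have "T a w b = - (P a w b * log 2 (Q a w b / P a w b))"
      unfolding T_def Qd using p pa pb pw False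
      by (simp add: log_divide log_mult algebra_simps)
    also have "log 2 (Q a w b / P a w b) = ln (Q a w b / P a w b) / ln 2"
      by (simp add: log_def)
    also have "ln (Q a w b / P a w b) \<le> Q a w b / P a w b - 1"
      by (rule ln_le_minus_one) (use qp p in simp)
    then have "P a w b * (ln (Q a w b / P a w b) / ln 2) \<le> P a w b * ((Q a w b / P a w b - 1) / ln 2)"
      using p by (intro mult_left_mono divide_right_mono) auto
    then have "- (P a w b * (ln (Q a w b / P a w b) / ln 2)) \<ge> - (P a w b * ((Q a w b / P a w b - 1) / ln 2))"
      by linarith
    also have "- (P a w b * ((Q a w b / P a w b - 1) / ln 2)) = (P a w b - Q a w b) / ln 2"
      using p by (simp add: field_simps)
    finally show ?thesis .
  qed
  have sumQ: "(\<Sum>w\<in>W. \<Sum>a\<in>A. \<Sum>b\<in>B. Q a w b) = (\<Sum>w\<in>W. \<Sum>a\<in>A. \<Sum>b\<in>B. P a w b)"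
  proof (rule sum.cong[OF refl])
    fix w
    show "(\<Sum>a\<in>A. \<Sum>b\<in>B. Q a w b) = (\<Sum>a\<in>A. \<Sum>b\<in>B. P a w b)"
    proof (cases "PW w = 0")
      case True then show ?thesis unfolding Q_def using PW_def by simp
    next
      case False
      have "(\<Sum>a\<in>A. \<Sum>b\<in>B. Q a w b) = (\<Sum>a\<in>A. \<Sum>b\<in>B. PAW a w * PWB w b) / PW w"
        unfolding Q_def using False by (simp add: sum_divide_distrib)
      also have "\<dots> = (\<Sum>a\<in>A. PAW a w) * (\<Sum>b\<in>B. PWB w b) / PW w"
        by (simp add: sum_product)
      also have "\<dots> = PW w" using False PAWs PWBs by simp
      finally show ?thesis unfolding PW_def by simp
    qed
  qed
  have "(\<Sum>w\<in>W. \<Sum>a\<in>A. \<Sum>b\<in>B. (P a w b - Q a w b) / ln 2) \<le> (\<Sum>w\<in>W. \<Sum>a\<in>A. \<Sum>b\<in>B. T a w b)"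
    by (intro sum_mono Tge)
  moreover have "(\<Sum>w\<in>W. \<Sum>a\<in>A. \<Sum>b\<in>B. (P a w b - Q a w b) / ln 2) = 0"
    using sumQ by (simp add: sum_subtractf sum_divide_distrib[symmetric])
  ultimately have T0: "(\<Sum>w\<in>W. \<Sum>a\<in>A. \<Sum>b\<in>B. T a w b) \<ge> 0" by simp
  have i: "(\<Sum>a\<in>A. \<Sum>b\<in>B. P a w b * log 2 (PW w)) = plog (PW w)" for w
    unfolding plog_eq PW_def by (simp add: sum_distrib_right)
  have ii: "(\<Sum>b\<in>B. P a w b * log 2 (PAW a w)) = plog (PAW a w)" for a w
    unfolding plog_eq PAW_def by (simp add: sum_distrib_right)
  have iii: "(\<Sum>a\<in>A. \<Sum>b\<in>B. P a w b * log 2 (PWB w b)) = (\<Sum>b\<in>B. plog (PWB w b))" for w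
    unfolding plog_eq PWB_def by (subst sum.swap) (simp add: sum_distrib_right)
  have "(\<Sum>w\<in>W. \<Sum>a\<in>A. \<Sum>b\<in>B. T a w b) = (\<Sum>w\<in>W. \<Sum>a\<in>A. \<Sum>b\<in>B. plog (P a w b) + P a w b * log 2 (PW w) - P a w b * log 2 (PAW a w) - P a w b * log 2 (PWB w b))"
    by (intro sum.cong refl Tdec)
  also have "\<dots> = (\<Sum>w\<in>W. \<Sum>a\<in>A. \<Sum>b\<in>B. plog (P a w b)) + (\<Sum>w\<in>W. plog (PW w)) - (\<Sum>w\<in>W. \<Sum>a\<in>A. plog (PAW a w)) - (\<Sum>w\<in>W. \<Sum>b\<in>B. plog (PWB w b))"
    by (simp add: sum_subtractf sum.distrib i ii iii)
  finally have "0 \<le> (\<Sum>w\<in>W. \<Sum>a\<in>A. \<Sum>b\<in>B. plog (P a w b)) + (\<Sum>w\<in>W. plog (PW w)) - (\<Sum>w\<in>W. \<Sum>a\<in>A. plog (PAW a w)) - (\<Sum>w\<in>W. \<Sum>b\<in>B. plog (PWB w b))"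
    using T0 by simp
  moreover have "(\<Sum>a\<in>A. \<Sum>w\<in>W. \<Sum>b\<in>B. plog (P a w b)) = (\<Sum>w\<in>W. \<Sum>a\<in>A. \<Sum>b\<in>B. plog (P a w b))"
    by (rule sum.swap)
  moreover have "(\<Sum>a\<in>A. \<Sum>w\<in>W. plog (PAW a w)) = (\<Sum>w\<in>W. \<Sum>a\<in>A. plog (PAW a w))"
    by (rule sum.swap)
  ultimately show ?thesis unfolding PAW_def PWB_def PW_def by simp
qed


lemma margB:
  assumes "prob_space M" "\<forall>i. X i \<in> measurable M (count_space UNIV)" "length u = n"
  shows "(\<Sum>b\<in>UNIV. block_prob M X s (Suc n) (u@[b])) = block_prob M X s n (u :: ('a::finite) list)"
  using marg1[OF assms, where m=1 and s=s] by (simp add: sum_words_1)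

lemma margF:
  assumes "prob_space M" "\<forall>i. X i \<in> measurable M (count_space UNIV)" "length v = n"
  shows "(\<Sum>a\<in>UNIV. block_prob M X s (Suc n) (a#v)) = block_prob M X (Suc s) n (v :: ('a::finite) list)"
  using marg2[OF assms, where n=1 and s=s] by (simp add: sum_words_1)

lemma be_eq: "block_entropy M X n = - (\<Sum>w\<in>words n. plog (block_prob M X 0 n w))"
  unfolding block_entropy_def plog_def Let_def by simp

lemma ssa:
  fixes X :: "nat \<Rightarrow> 'm \<Rightarrow> 'a::finite"
  assumes st: "stationary_process M X"
  shows "block_entropy M X (Suc (Suc j)) + block_entropy M X j \<le> 2 * block_entropy M X (Suc j)"
proof -
  have ps: "prob_space M" and meas: "\<forall>i. X i \<in> measurable M (count_space UNIV)"
    and sh: "\<And>s n w. block_prob M X s n w = block_prob M X 0 n w"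
    using st unfolding stationary_process_def by auto
  define P where "P = (\<lambda>a w b. block_prob M X 0 (Suc (Suc j)) (a # w @ [b]))"
  have nn: "\<And>a w b. P a w b \<ge> 0" unfolding P_def block_prob_def by simp
  note c = cmi[of UNIV "words j" UNIV P, OF finite finite_words finite nn]
  have e1: "(\<Sum>b\<in>UNIV. P a w b) = block_prob M X 0 (Suc j) (a # w)" if "w \<in> words j" for a w
    unfolding P_def using margB[OF ps meas, of "a # w" "Suc j" 0] that by (simp add: words_def)
  have e2: "(\<Sum>a\<in>UNIV. P a w b) = block_prob M X 0 (Suc j) (w @ [b])" if "w \<in> words j" for b w
    unfolding P_def using margF[OF ps meas, of "w @ [b]" "Suc j" 0] that sh[of "Suc 0" "Suc j" "w @ [b]"] by (simp add: words_def)
  have e3: "(\<Sum>a\<in>UNIV. \<Sum>b\<in>UNIV. P a w b) = block_prob M X 0 j w" if "w \<in> words j" for w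
    using e1[OF that] margF[OF ps meas, of w j 0] that sh[of "Suc 0" j w] by (simp add: words_def)
  have H2: "(\<Sum>a\<in>UNIV. \<Sum>w\<in>words j. \<Sum>b\<in>UNIV. plog (P a w b)) = - block_entropy M X (Suc (Suc j))"
    unfolding be_eq P_def sum_words_front[where n="Suc j"] sum_words_back[where n=j] by simp
  have H1a: "(\<Sum>a\<in>UNIV. \<Sum>w\<in>words j. plog (\<Sum>b\<in>UNIV. P a w b)) = - block_entropy M X (Suc j)"
    unfolding be_eq sum_words_front[where n=j] by (simp add: e1 cong: sum.cong)
  have H1b: "(\<Sum>w\<in>words j. \<Sum>b\<in>UNIV. plog (\<Sum>a\<in>UNIV. P a w b)) = - block_entropy M X (Suc j)"
    unfolding be_eq sum_words_back[where n=j] by (simp add: e2 cong: sum.cong)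
  have H0: "(\<Sum>w\<in>words j. plog (\<Sum>a\<in>UNIV. \<Sum>b\<in>UNIV. P a w b)) = - block_entropy M X j"
    unfolding be_eq by (simp add: e3 cong: sum.cong)
  show ?thesis using c unfolding H2 H1a H1b H0 by simp
qed

lemma mi_eq:
  fixes X :: "nat \<Rightarrow> 'm \<Rightarrow> 'a::finite"
  assumes st: "stationary_process M X"
  shows "halves_mutual_info M X m = 2 * block_entropy M X m - block_entropy M X (2 * m)"
proof -
  have ps: "prob_space M" and meas: "\<forall>i. X i \<in> measurable M (count_space UNIV)"
    and sh: "\<And>s n w. block_prob M X s n w = block_prob M X 0 n w"
    using st unfolding stationary_process_def by auto
  define P where "P = (\<lambda>u v. block_prob M X 0 (m + m) (u @ v))"
  have nn: "\<And>u v. P u v \<ge> 0" unfolding P_def block_prob_def by simp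
  have m1: "(\<Sum>v'\<in>words m. P u v') = block_prob M X 0 m u" if "u \<in> words m" for u
    unfolding P_def using marg1[OF ps meas, where u=u and n=m and m=m and s=0] that by (simp add: words_def)
  have m2: "(\<Sum>u'\<in>words m. P u' v) = block_prob M X m m v" if "v \<in> words m" for v
    unfolding P_def using marg2[OF ps meas, where v=v and n=m and m=m and s=0] that by (simp add: words_def)
  have "halves_mutual_info M X m = (\<Sum>u\<in>words m. \<Sum>v\<in>words m. (if P u v = 0 then 0 else P u v * log 2 (P u v / ((\<Sum>v'\<in>words m. P u v') * (\<Sum>u'\<in>words m. P u' v)))))"
    unfolding halves_mutual_info_def Let_def
    by (intro sum.cong refl) (simp only: m1 m2, simp add: P_def mult_2)
  also have "\<dots> = (\<Sum>u\<in>words m. \<Sum>v\<in>words m. plog (P u v)) - (\<Sum>u\<in>words m. plog (\<Sum>v\<in>words m. P u v)) - (\<Sum>v\<in>words m. plog (\<Sum>u\<in>words m. P u v))"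
    by (rule mi_identity[OF finite_words finite_words nn])
  also have "(\<Sum>u\<in>words m. \<Sum>v\<in>words m. plog (P u v)) = - block_entropy M X (2 * m)"
    unfolding be_eq mult_2 sum_words_add P_def by simp
  also have "(\<Sum>u\<in>words m. plog (\<Sum>v\<in>words m. P u v)) = - block_entropy M X m"
    unfolding be_eq by (simp add: m1 cong: sum.cong)
  also have "(\<Sum>v\<in>words m. plog (\<Sum>u\<in>words m. P u v)) = - block_entropy M X m"
    unfolding be_eq by (simp add: m2 sh[of m m] cong: sum.cong)
  finally show ?thesis by simp
qed



lemma h_anti:
  fixes H :: "nat \<Rightarrow> real"
  assumes ssa: "\<And>j. H (Suc (Suc j)) + H j \<le> 2 * H (Suc j)"
    and i1: "1 \<le> i" and ik: "i \<le> k"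
  shows "H k - H (k-1) \<le> H i - H (i-1)"
  using ik
proof (induction k rule: dec_induct)
  case (step k)
  then obtain j where k: "k = Suc j" using i1 by (cases k) auto
  have "H (Suc k) - H (Suc k - 1) \<le> H k - H (k - 1)" using ssa[of j] k by simp
  then show ?case using step by simp
qed simp

lemma tele:
  fixes H :: "nat \<Rightarrow> real"
  assumes ssa: "\<And>j. H (Suc (Suc j)) + H j \<le> 2 * H (Suc j)"
  shows "j \<le> J \<Longrightarrow> real j * (H (n+J) - H (n+J-1)) \<le> H (n+j) - H n"
proof (induction j)
  case (Suc j)
  have "H (n+J) - H (n+J-1) \<le> H (n + Suc j) - H (n + Suc j - 1)"
    by (rule h_anti[where H=H, OF ssa]) (use Suc in auto)
  then show ?case using Suc by (simp add: algebra_simps)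
qed simp

lemma div_arith:
  fixes x p q d :: real
  assumes "x > 0" "p \<le> q - d * x"
  shows "p / x \<le> q / x - d"
proof -
  have "p / x \<le> (q - d * x) / x" using assms by (simp add: divide_right_mono)
  also have "(q - d * x) / x = q / x - d" using assms(1) by (simp add: diff_divide_distrib)
  finally show ?thesis .
qed

lemma fin_even: fixes a b c r :: real assumes "r*(a-b) \<le> a - c" shows "2*c - a \<le> a - (a-b)*(2*r)"
  using assms by (simp add: algebra_simps)

lemma fin_odd: fixes a b c r :: real assumes "r*(a-b) \<le> b - c" shows "2*c - b \<le> a - (a-b)*(2*r+1)"
  using assms by (simp add: algebra_simps)

theorem proposition14:
  fixes M :: "'m measure" and X :: "nat \<Rightarrow> 'm \<Rightarrow> 'a::finite" and L :: nat
  assumes "stationary_process M X"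
    and "L \<ge> 2"
  shows "entropy_rate_est M X L - entropy_gain M X L \<ge> excess_est M X L / real L"
proof -
  define H where "H = block_entropy M X"
  have s: "\<And>j. H (Suc (Suc j)) + H j \<le> 2 * H (Suc j)" unfolding H_def by (rule ssa[OF assms(1)])
  have mi: "\<And>m. halves_mutual_info M X m = 2 * H m - H (2*m)" unfolding H_def by (rule mi_eq[OF assms(1)])
  have Lp: "real L > 0" using assms(2) by simp
  show ?thesis
  proof (cases "even L")
    case True
    then obtain m where L: "L = 2*m" by auto
    have "real m * (H (m+m) - H (m+m-1)) \<le> H (m+m) - H m" by (rule tele[where H=H, OF s]) simp
    then have h: "real m * (H (m + m) - H (m + m - 1)) \<le> H (m + m) - H m" .
    have e: "L = m + m" "2*m = m+m" "real (m+m) = 2 * real m" using L by auto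
    have "2 * H m - H (2*m) \<le> H L - (H L - H (L - 1)) * real L"
      unfolding e by (rule fin_even[OF h])
    then have "(2 * H m - H (2*m)) / real L \<le> H L / real L - (H L - H (L - 1))"
      by (rule div_arith[OF Lp])
    moreover have "excess_est M X L = 2 * H m - H (2*m)"
      using True L by (simp add: excess_est_def mi)
    moreover have "entropy_rate_est M X L = H L / real L" by (simp add: entropy_rate_est_def H_def)
    moreover have "entropy_gain M X L = H L - H (L - 1)" by (simp add: entropy_gain_def H_def)
    ultimately show ?thesis by simp
  next
    case False
    then obtain m where L: "L = 2*m+1" using oddE by blast
    have "real m * (H (m+(m+1)) - H (m+(m+1)-1)) \<le> H (m+m) - H m" by (rule tele[where H=H, OF s]) simp
    then have h: "real m * (H (m + (m+1)) - H (m + (m+1) - 1)) \<le> H (m + m) - H m" .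
    have e: "m + (m+1) - 1 = m + m" "m + (m+1) = L" "L - 1 = m+m" "2*m = m+m" "real L = 2 * real m + 1" using L by auto
    have "2 * H m - H (2*m) \<le> H L - (H L - H (L - 1)) * real L"
      using h unfolding e by (rule fin_odd)
    then have "(2 * H m - H (2*m)) / real L \<le> H L / real L - (H L - H (L - 1))"
      by (rule div_arith[OF Lp])
    moreover have "excess_est M X L = 2 * H m - H (2*m)"
      using False L by (simp add: excess_est_def mi del: mult_2)
    moreover have "entropy_rate_est M X L = H L / real L" by (simp add: entropy_rate_est_def H_def)
    moreover have "entropy_gain M X L = H L - H (L - 1)" by (simp add: entropy_gain_def H_def)
    ultimately show ?thesis by simp
  qed
qed

end
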